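(* Every $2\times2$ column-stochastic matrix is divisible in $s(2)$.
   Context: $s(2)$ denotes the set of $2\times 2$ real matrices with non-negative entries whose columns each sum to $1$; it is a monoid under matrix multiplication whose group of units is the set of $2\times2$ permutation matrices. $A\in s(2)$ is indivisible if for every decomposition $A=BC$ with $B,C\in s(2)$ exactly one of $B,C$ is a permutation matrix, and divisible otherwise. *)

theory Defs
  imports "HOL-Analysis.Analysis" "HOL-Combinatorics.Permutations"
begin

text \<open>s(2): 2x2 real matrices with non-negative entries whose columns each sum to 1.
  A matrix A :: real^2^2 has entry A $ i $ j in row i, column j.\<close>
definition s2 :: "(real^2^2) set" where
  "s2 = {A. (\<forall>i j. 0 \<le> A $ i $ j) \<and> (\<forall>j. (\<Sum>i\<in>UNIV. A $ i $ j) = 1)}"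

definition perm_mat :: "real^2^2 \<Rightarrow> bool" where
  "perm_mat A \<longleftrightarrow> (\<exists>p. p permutes (UNIV :: 2 set) \<and>
      A = (\<chi> i j. if i = p j then 1 else 0))"

definition indivisible :: "real^2^2 \<Rightarrow> bool" where
  "indivisible A \<longleftrightarrow> (\<forall>B\<in>s2. \<forall>C\<in>s2. A = B ** C \<longrightarrow> (perm_mat B \<noteq> perm_mat C))"

definition divisible :: "real^2^2 \<Rightarrow> bool" where
  "divisible A \<longleftrightarrow> \<not> indivisible A"

end

theory Submission
  imports Defs
begin

definition mk :: "real \<Rightarrow> real \<Rightarrow> real^2^2" where
  "mk x y = (\<chi> i j. if i = 1 then (if j = 1 then x else y) else (if j = 1 then 1 - x else 1 - y))"

lemma UNIV2: "(UNIV :: 2 set) = {1, 2}"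
  using exhaust_2 by auto

lemma sum2: "(\<Sum>i\<in>(UNIV::2 set). f i) = f 1 + f 2"
  by (simp add: UNIV2)

lemma mk_s2: "A \<in> s2 \<Longrightarrow> A = mk (A$1$1) (A$1$2)"
proof -
  assume "A \<in> s2"
  then have c: "\<And>j. A$1$j + A$2$j = 1" by (auto simp: s2_def sum2)
  show ?thesis unfolding mk_def
    using c[of 1] c[of 2] by (auto simp: vec_eq_iff forall_2 algebra_simps)
qed

lemma mk_in: "0 \<le> x \<Longrightarrow> x \<le> 1 \<Longrightarrow> 0 \<le> y \<Longrightarrow> y \<le> 1 \<Longrightarrow> mk x y \<in> s2"
  by (auto simp: s2_def mk_def sum2 forall_2)

lemma mk_mult: "mk a b ** mk c d = mk (a*c + b*(1-c)) (a*d + b*(1-d))"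
  by (simp add: mk_def matrix_matrix_mult_def vec_eq_iff forall_2 sum2 algebra_simps)

lemma perm_mk: "perm_mat (mk x y) \<longleftrightarrow> (x = 1 \<and> y = 0) \<or> (x = 0 \<and> y = 1)"
proof
  assume "perm_mat (mk x y)"
  then obtain p where p: "p permutes (UNIV :: 2 set)"
    and e: "mk x y = (\<chi> i j. if i = p j then 1 else 0)" unfolding perm_mat_def by blast
  have x: "x = (if 1 = p 1 then 1 else 0)" using arg_cong[OF e, of "\<lambda>M. M$1$1"] by (simp add: mk_def)
  have y: "y = (if 1 = p 2 then 1 else 0)" using arg_cong[OF e, of "\<lambda>M. M$1$2"] by (simp add: mk_def)
  have inj: "p 1 \<noteq> p 2" using permutes_inj[OF p] by (metis injD num.simps(4) one_neq_zero zero_neq_numeral exhaust_2 num1_eq_iff)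
  show "(x = 1 \<and> y = 0) \<or> (x = 0 \<and> y = 1)"
    using x y inj exhaust_2[of "p 1"] exhaust_2[of "p 2"] by auto
next
  assume "(x = 1 \<and> y = 0) \<or> (x = 0 \<and> y = 1)"
  then show "perm_mat (mk x y)"
  proof
    assume h: "x = 1 \<and> y = 0"
    show ?thesis unfolding perm_mat_def
      by (rule exI[of _ id]) (auto simp: h mk_def vec_eq_iff forall_2 permutes_id)
  next
    assume h: "x = 0 \<and> y = 1"
    show ?thesis unfolding perm_mat_def
      by (rule exI[of _ "Transposition.transpose 1 2"])
        (auto simp: h mk_def vec_eq_iff forall_2 permutes_swap_id)
  qed
qed

theorem fact2:
  assumes "A \<in> s2"
  shows "divisible A"
proof -
  define a where "a = A$1$1"
  define b where "b = A$1$2"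
  have A: "A = mk a b" using mk_s2[OF assms] a_def b_def by simp
  have ab: "0 \<le> a" "a \<le> 1" "0 \<le> b" "b \<le> 1"
    using assms A by (auto simp: s2_def mk_def forall_2 dest: spec[where x=1] spec[where x=2]
      spec[where x="1::2"] spec[where x="2::2"])
  have "\<exists>B\<in>s2. \<exists>C\<in>s2. A = B ** C \<and> perm_mat B = perm_mat C"
  proof (cases "perm_mat A")
    case True
    have "A = A ** mk 1 0" using A by (simp add: mk_mult)
    moreover have "mk 1 0 \<in> s2" by (rule mk_in) auto
    moreover have "perm_mat (mk 1 0)" by (simp add: perm_mk)
    ultimately show ?thesis using True assms by blast
  next
    case False
    then have np: "\<not> ((a = 1 \<and> b = 0) \<or> (a = 0 \<and> b = 1))" using A perm_mk by simp
    consider "a = b" | "a < b" "b < 1" | "a > b" "b > 0" | "a < b" "b = 1" | "a > b" "b = 0"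
      using ab by linarith
    then show ?thesis
    proof cases
      case 1
      have "A = mk a b ** mk (1/2) (1/2)" using A 1 by (simp add: mk_mult algebra_simps)
      then show ?thesis using False A mk_in[of "1/2" "1/2"] perm_mk[of "1/2" "1/2"] assms by auto
    next
      case 2
      define t where "t = (1 + b)/2"
      define s where "s = (t - b)/(t - a)"
      have t: "b < t" "t < 1" using 2 unfolding t_def by auto
      have s: "0 < s" "s < 1" using t 2 unfolding s_def by (auto simp: field_simps)
      have "s*(t-a) = t-b" using t 2 unfolding s_def by simp
      then have eq: "b = s*a + t*(1-s)" by (simp add: algebra_simps)
      have "mk a t ** mk 1 s = mk a (s*a + t*(1-s))" by (simp add: mk_mult algebra_simps)
      then have "A = mk a t ** mk 1 s" using A eq by metis
      moreover have "mk a t \<in> s2" "mk 1 s \<in> s2" using t s ab by (auto intro: mk_in)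
      moreover have "\<not> perm_mat (mk a t)" "\<not> perm_mat (mk 1 s)" using t s ab by (auto simp: perm_mk)
      ultimately show ?thesis by blast
    next
      case 3
      define t where "t = b/2"
      define s where "s = (b - t)/(a - t)"
      have t: "0 < t" "t < b" using 3 unfolding t_def by auto
      have s: "0 < s" "s < 1" using t 3 unfolding s_def by (auto simp: field_simps)
      have "s*(a-t) = b-t" using t 3 unfolding s_def by simp
      then have eq: "b = s*a + t*(1-s)" by (simp add: algebra_simps)
      have "mk a t ** mk 1 s = mk a (s*a + t*(1-s))" by (simp add: mk_mult algebra_simps)
      then have "A = mk a t ** mk 1 s" using A eq by metis
      moreover have "mk a t \<in> s2" "mk 1 s \<in> s2" using t s ab by (auto intro: mk_in)
      moreover have "\<not> perm_mat (mk a t)" "\<not> perm_mat (mk 1 s)" using t s ab by (auto simp: perm_mk)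
      ultimately show ?thesis by blast
    next
      case 4
      have a0: "0 < a" using 4 np ab by auto
      define t where "t = a/2"
      define s where "s = (a - t)/(b - t)"
      have t: "0 < t" "t < a" using a0 unfolding t_def by auto
      have s: "0 < s" "s < 1" using t 4 unfolding s_def by (auto simp: field_simps)
      have "s*(b-t) = a-t" using t 4 unfolding s_def by simp
      then have eq: "a = (1-s)*t + s*b" by (simp add: algebra_simps)
      have "mk t b ** mk (1-s) 0 = mk ((1-s)*t + s*b) b" by (simp add: mk_mult algebra_simps)
      then have "A = mk t b ** mk (1-s) 0" using A eq by metis
      moreover have "mk t b \<in> s2" "mk (1-s) 0 \<in> s2" using t s ab by (auto intro: mk_in)
      moreover have "\<not> perm_mat (mk t b)" "\<not> perm_mat (mk (1-s) 0)" using t s ab by (auto simp: perm_mk)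
      ultimately show ?thesis by blast
    next
      case 5
      have a1: "a < 1" using 5 np ab by auto
      define t where "t = (1 + a)/2"
      define s where "s = (t - a)/(t - b)"
      have t: "a < t" "t < 1" using a1 unfolding t_def by auto
      have s: "0 < s" "s < 1" using t 5 unfolding s_def by (auto simp: field_simps)
      have "s*(t-b) = t-a" using t 5 unfolding s_def by simp
      then have eq: "a = (1-s)*t + s*b" by (simp add: algebra_simps)
      have "mk t b ** mk (1-s) 0 = mk ((1-s)*t + s*b) b" by (simp add: mk_mult algebra_simps)
      then have "A = mk t b ** mk (1-s) 0" using A eq by metis
      moreover have "mk t b \<in> s2" "mk (1-s) 0 \<in> s2" using t s ab by (auto intro: mk_in)
      moreover have "\<not> perm_mat (mk t b)" "\<not> perm_mat (mk (1-s) 0)" using t s ab by (auto simp: perm_mk)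
      ultimately show ?thesis by blast
    qed
  qed
  then show ?thesis unfolding divisible_def indivisible_def by blast
qed

end
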